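(* Let $\alpha_j\ge0$, $j=1,2,\dots$, and define $$A_k:=\alpha_k+\sum_{0<p<k}\ \sum_{0<i_1<\dots<i_p<k}\alpha_{i_1}\alpha_{i_2-i_1}\cdots\alpha_{i_p-i_{p-1}}\alpha_{k-i_p},\qquad k=1,2,\dots$$ Assume $A:=\sum_{j=1}^\infty\alpha_j<1$ and $\alpha_j\le c\,j^{-\gamma}$ for all $j\ge1$, for some $c>0$ and $\gamma>1$. Then there exists $C>0$ such that $A_k\le C\,k^{-\gamma}$ for all $k\ge1$. *)

theory Defs
  imports Complex_Main
begin

text \<open>Product \<alpha>_{i_1} \<alpha>_{i_2-i_1} ... \<alpha>_{k-i_p} for the index set I = {i_1 < ... < i_p}
  (with i_0 = 0 and i_{p+1} = k).\<close>
definition comp_prod :: "(nat \<Rightarrow> real) \<Rightarrow> nat \<Rightarrow> nat set \<Rightarrow> real" where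
  "comp_prod \<alpha> k I =
     (let xs = 0 # sorted_list_of_set I @ [k]
      in (\<Prod>i<length xs - 1. \<alpha> (xs ! Suc i - xs ! i)))"

definition Aseq :: "(nat \<Rightarrow> real) \<Rightarrow> nat \<Rightarrow> real" where
  "Aseq \<alpha> k = \<alpha> k +
     (\<Sum>p\<in>{0<..<k}. \<Sum>I\<in>{I. I \<subseteq> {0<..<k} \<and> card I = p}. comp_prod \<alpha> k I)"

end

theory Submission
  imports Defs "HOL-Analysis.Analysis"
begin


fun gp :: "(nat \<Rightarrow> real) \<Rightarrow> nat list \<Rightarrow> real" where
  "gp \<alpha> (a # b # xs) = \<alpha> (b - a) * gp \<alpha> (b # xs)"
| "gp \<alpha> _ = 1"

lemma prod_gp: "(\<Prod>i<length xs - 1. \<alpha> (xs ! Suc i - xs ! i)) = gp \<alpha> xs"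
proof (induction \<alpha> xs rule: gp.induct)
  case (1 \<alpha> a b xs)
  have "(\<Prod>i<length (a # b # xs) - 1. \<alpha> ((a # b # xs) ! Suc i - (a # b # xs) ! i))
      = (\<Prod>i<Suc (length (b # xs) - 1). \<alpha> ((a # b # xs) ! Suc i - (a # b # xs) ! i))" by simp
  also have "\<dots> = \<alpha> (b - a) * (\<Prod>i<length (b # xs) - 1. \<alpha> ((b # xs) ! Suc i - (b # xs) ! i))"
    by (subst prod.lessThan_Suc_shift) simp
  finally show ?case using 1 by simp
qed auto

lemma gp_shift: "gp \<alpha> (map ((+) j) xs) = gp \<alpha> xs"
  by (induction \<alpha> xs rule: gp.induct) auto

lemma sl_set: "sorted_wrt (<) xs \<Longrightarrow> sorted_list_of_set (set xs) = xs"
  by (rule strict_sorted_equal) (simp_all add: strict_sorted_list_of_set)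

lemma comp_prod_gp: "comp_prod \<alpha> k I = gp \<alpha> (0 # sorted_list_of_set I @ [k])"
  unfolding comp_prod_def Let_def by (rule prod_gp)

lemma comp_prod_empty: "comp_prod \<alpha> k {} = \<alpha> k"
  by (simp add: comp_prod_gp)

lemma comp_prod_insert:
  assumes "finite I" "I \<subseteq> {0<..<m}" "0 < j"
  shows "comp_prod \<alpha> (j + m) (insert j ((+) j ` I)) = \<alpha> j * comp_prod \<alpha> m I"
proof -
  let ?L = "sorted_list_of_set I"
  have sI: "sorted_wrt (<) ?L" "set ?L = I" using assms(1) by auto
  have "sorted_wrt (<) (j # map ((+) j) ?L)"
    using sI assms(2) by (auto simp: sorted_wrt_map)
  moreover have "set (j # map ((+) j) ?L) = insert j ((+) j ` I)" using sI by simp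
  ultimately have e: "sorted_list_of_set (insert j ((+) j ` I)) = j # map ((+) j) ?L"
    by (metis sl_set)
  have "comp_prod \<alpha> (j + m) (insert j ((+) j ` I)) = \<alpha> j * gp \<alpha> (j # map ((+) j) ?L @ [j + m])"
    unfolding comp_prod_gp e by simp
  also have "gp \<alpha> (j # map ((+) j) ?L @ [j + m]) = gp \<alpha> (map ((+) j) (0 # ?L @ [m]))" by simp
  also have "\<dots> = comp_prod \<alpha> m I" by (simp only: gp_shift comp_prod_gp)
  finally show ?thesis .
qed

lemma Aseq_Pow: "Aseq \<alpha> k = (\<Sum>I\<in>Pow {0<..<k}. comp_prod \<alpha> k I)"
proof -
  let ?S = "Pow {0<..<k} - {{}}"
  have "(\<Sum>p\<in>{0<..<k}. \<Sum>I\<in>{I. I \<subseteq> {0<..<k} \<and> card I = p}. comp_prod \<alpha> k I)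
     = (\<Sum>p\<in>{0<..<k}. \<Sum>I\<in>{I. I \<in> ?S \<and> card I = p}. comp_prod \<alpha> k I)"
    by (intro sum.cong refl) auto
  also have "\<dots> = (\<Sum>I\<in>?S. comp_prod \<alpha> k I)"
  proof (rule sum.group)
    show "card ` ?S \<subseteq> {0<..<k}"
    proof
      fix x assume "x \<in> card ` ?S"
      then obtain I where I: "I \<subseteq> {0<..<k}" "I \<noteq> {}" "x = card I" by auto
      have "finite I" using I(1) finite_subset by blast
      hence "card I > 0" using I by auto
      moreover have "card I \<le> card {0<..<k}" using I(1) by (intro card_mono) auto
      moreover have "card {0<..<k} < k" using \<open>card I > 0\<close> \<open>card I \<le> card {0<..<k}\<close> by auto
      ultimately show "x \<in> {0<..<k}" using I by auto
    qed
  qed auto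
  finally have "Aseq \<alpha> k = comp_prod \<alpha> k {} + (\<Sum>I\<in>?S. comp_prod \<alpha> k I)"
    by (simp add: Aseq_def comp_prod_empty)
  also have "\<dots> = (\<Sum>I\<in>Pow {0<..<k}. comp_prod \<alpha> k I)"
    by (subst sum.remove[of _ "{}"]) auto
  finally show ?thesis .
qed

lemma Aseq_rec: "Aseq \<alpha> k = \<alpha> k + (\<Sum>j\<in>{0<..<k}. \<alpha> j * Aseq \<alpha> (k - j))"
proof -
  let ?S = "Pow {0<..<k} - {{}}"
  let ?T = "Sigma {0<..<k} (\<lambda>j. Pow {0<..<k - j})"
  have "(\<Sum>I\<in>?S. comp_prod \<alpha> k I) = (\<Sum>(j, I)\<in>?T. comp_prod \<alpha> k (insert j ((+) j ` I)))"
  proof (rule sym, rule sum.reindex_bij_witness[where i = "\<lambda>I. (Min I, (\<lambda>x. x - Min I) ` (I - {Min I}))"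
        and j = "\<lambda>(j, I). insert j ((+) j ` I)"])
    fix a assume a: "a \<in> ?T"
    obtain j I where aj: "a = (j, I)" by fastforce
    from a aj have j: "0 < j" "j < k" and I: "I \<subseteq> {0<..<k - j}" by auto
    have fI: "finite I" using I finite_subset by blast
    have m: "Min (insert j ((+) j ` I)) = j"
    proof (rule Min_eqI)
      show "finite (insert j ((+) j ` I))" using fI by simp
      show "\<And>y. y \<in> insert j ((+) j ` I) \<Longrightarrow> j \<le> y" by auto
    qed simp
    have d: "insert j ((+) j ` I) - {j} = (+) j ` I" using I by auto
    have "(\<lambda>x. x - j) ` (insert j ((+) j ` I) - {j}) = I"
      unfolding d image_image by simp
    thus "(\<lambda>I. (Min I, (\<lambda>x. x - Min I) ` (I - {Min I}))) ((\<lambda>(j, I). insert j ((+) j ` I)) a) = a"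
      by (simp add: m aj)
    have "(+) j ` I \<subseteq> {0<..<k}" using I j by (auto simp: subset_iff)
    thus "(\<lambda>(j, I). insert j ((+) j ` I)) a \<in> ?S" using j aj by simp
    show "comp_prod \<alpha> k ((\<lambda>(j, I). insert j ((+) j ` I)) a) = (case a of (j, I) \<Rightarrow> comp_prod \<alpha> k (insert j ((+) j ` I)))"
      by (simp add: aj)
  next
    fix b assume b: "b \<in> ?S"
    hence fb: "b \<subseteq> {0<..<k}" "b \<noteq> {}" by auto
    hence fb2: "finite b" using finite_subset by blast
    let ?m = "Min b"
    have mb: "?m \<in> b" using fb fb2 Min_in by blast
    have lt: "\<And>x. x \<in> b - {?m} \<Longrightarrow> ?m < x"
      proof -
      fix x assume x: "x \<in> b - {?m}"
      have "?m \<le> x" using x fb2 by (intro Min_le) auto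
      thus "?m < x" using x by auto
    qed
    have "(+) ?m ` (\<lambda>x. x - ?m) ` (b - {?m}) = (\<lambda>x. ?m + (x - ?m)) ` (b - {?m})"
      by (simp add: image_image)
    also have "\<dots> = (\<lambda>x. x) ` (b - {?m})"
      by (intro image_cong refl) (use lt in force)
    finally have "(+) ?m ` (\<lambda>x. x - ?m) ` (b - {?m}) = b - {?m}" by simp
    hence "insert ?m ((+) ?m ` (\<lambda>x. x - ?m) ` (b - {?m})) = b" using mb by blast
    thus "(\<lambda>(j, I). insert j ((+) j ` I)) ((\<lambda>I. (Min I, (\<lambda>x. x - Min I) ` (I - {Min I}))) b) = b"
      by simp
    have m1: "?m \<in> {0<..<k}" using mb fb by blast
    have "(\<lambda>x. x - ?m) ` (b - {?m}) \<subseteq> {0<..<k - ?m}"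
    proof
      fix y assume "y \<in> (\<lambda>x. x - ?m) ` (b - {?m})"
      then obtain x where x: "x \<in> b - {?m}" "y = x - ?m" by blast
      have "?m < x" "x < k" using lt[OF x(1)] x(1) fb by auto
      thus "y \<in> {0<..<k - ?m}" using x(2) by auto
    qed
    thus "(\<lambda>I. (Min I, (\<lambda>x. x - Min I) ` (I - {Min I}))) b \<in> ?T"
      using m1 by simp
  qed
  also have "\<dots> = (\<Sum>j\<in>{0<..<k}. \<Sum>I\<in>Pow {0<..<k - j}. comp_prod \<alpha> k (insert j ((+) j ` I)))"
    by (rule sum.Sigma[symmetric]) auto
  also have "\<dots> = (\<Sum>j\<in>{0<..<k}. \<alpha> j * Aseq \<alpha> (k - j))"
  proof (intro sum.cong refl)
    fix j assume j: "j \<in> {0<..<k}"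
    have "(\<Sum>I\<in>Pow {0<..<k - j}. comp_prod \<alpha> k (insert j ((+) j ` I)))
        = (\<Sum>I\<in>Pow {0<..<k - j}. \<alpha> j * comp_prod \<alpha> (k - j) I)"
    proof (intro sum.cong refl)
      fix I assume "I \<in> Pow {0<..<k - j}"
      hence "finite I" "I \<subseteq> {0<..<k - j}" using finite_subset by auto
      from comp_prod_insert[OF this, of j \<alpha>] j show "comp_prod \<alpha> k (insert j ((+) j ` I)) = \<alpha> j * comp_prod \<alpha> (k - j) I"
        by simp
    qed
    also have "\<dots> = \<alpha> j * Aseq \<alpha> (k - j)" by (simp add: Aseq_Pow sum_distrib_left)
    finally show "(\<Sum>I\<in>Pow {0<..<k - j}. comp_prod \<alpha> k (insert j ((+) j ` I))) = \<alpha> j * Aseq \<alpha> (k - j)" .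
  qed
  finally have main: "(\<Sum>I\<in>?S. comp_prod \<alpha> k I) = (\<Sum>j\<in>{0<..<k}. \<alpha> j * Aseq \<alpha> (k - j))" .
  have "Aseq \<alpha> k = comp_prod \<alpha> k {} + (\<Sum>I\<in>?S. comp_prod \<alpha> k I)"
    unfolding Aseq_Pow by (subst sum.remove[of _ "{}"]) auto
  thus ?thesis using main by (simp add: comp_prod_empty)
qed

theorem lemma12:
  fixes \<alpha> :: "nat \<Rightarrow> real" and c \<gamma> :: real
  assumes nonneg: "\<And>j. j \<ge> 1 \<Longrightarrow> \<alpha> j \<ge> 0"
    and sum_lt1: "(\<Sum>j. \<alpha> (Suc j)) < 1"
    and c_pos: "c > 0" and gamma_gt1: "\<gamma> > 1"
    and bound: "\<And>j. j \<ge> 1 \<Longrightarrow> \<alpha> j \<le> c * real j powr (-\<gamma>)"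
  shows "\<exists>C>0. \<forall>k\<ge>1. Aseq \<alpha> k \<le> C * real k powr (-\<gamma>)"
proof -
  define a where "a = (\<Sum>j. \<alpha> (Suc j))"
  have a1: "a < 1" using sum_lt1 a_def by simp
  have summ: "summable (\<lambda>j. \<alpha> (Suc j))"
  proof (rule summable_comparison_test')
    have "summable (\<lambda>n. real n powr (-\<gamma>))" using gamma_gt1 summable_real_powr_iff by simp
    hence "summable (\<lambda>n. real (Suc n) powr (-\<gamma>))" using summable_Suc_iff[of "\<lambda>n. real n powr (-\<gamma>)"] by simp
    thus "summable (\<lambda>n. c * real (Suc n) powr (-\<gamma>))" by (rule summable_mult)
    fix n :: nat assume "n \<ge> 0"
    show "norm (\<alpha> (Suc n)) \<le> c * real (Suc n) powr (-\<gamma>)"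
      using nonneg[of "Suc n"] bound[of "Suc n"] by simp
  qed
  have a0: "0 \<le> a" unfolding a_def using summ nonneg by (intro suminf_nonneg) auto
  have psum: "(\<Sum>j\<in>{0<..N}. \<alpha> j) \<le> a" for N
  proof -
    have e: "{0<..N} = Suc ` {..<N}" using image_Suc_lessThan by auto
    have "(\<Sum>j\<in>{0<..N}. \<alpha> j) = (\<Sum>i<N. \<alpha> (Suc i))" unfolding e by (simp add: sum.reindex)
    also have "\<dots> \<le> a" unfolding a_def using summ nonneg by (intro sum_le_suminf) auto
    finally show ?thesis .
  qed
  have psum2: "(\<Sum>j\<in>J. \<alpha> j) \<le> a" if "J \<subseteq> {0<..<k}" for J k
  proof -
    have "(\<Sum>j\<in>J. \<alpha> j) \<le> (\<Sum>j\<in>{0<..k}. \<alpha> j)"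
      using that nonneg by (intro sum_mono2) auto
    thus ?thesis using psum[of k] by simp
  qed
  have Anonneg: "k \<ge> 1 \<Longrightarrow> Aseq \<alpha> k \<ge> 0" for k
  proof (induction k rule: less_induct)
    case (less k)
    have "0 \<le> \<alpha> k + (\<Sum>j\<in>{0<..<k}. \<alpha> j * Aseq \<alpha> (k - j))"
      using less nonneg by (intro add_nonneg_nonneg sum_nonneg mult_nonneg_nonneg) auto
    thus ?case by (simp add: Aseq_rec[of \<alpha> k])
  qed
  define S where "S = a / (1 - a)"
  have S0: "0 \<le> S" using a0 a1 S_def by simp
  have Seq: "a + a * S = S" using a1 unfolding S_def by (simp add: field_simps)
  have Pbound: "(\<Sum>m\<in>{0<..n}. Aseq \<alpha> m) \<le> S" for n
  proof (induction n rule: less_induct)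
    case (less n)
    show ?case
    proof (cases n)
      case 0 thus ?thesis using S0 by simp
    next
      case (Suc n')
      let ?M = "{0<..n}"
      have "(\<Sum>m\<in>?M. Aseq \<alpha> m) = (\<Sum>m\<in>?M. \<alpha> m) + (\<Sum>m\<in>?M. \<Sum>j\<in>{0<..<m}. \<alpha> j * Aseq \<alpha> (m - j))"
        by (subst sum.distrib[symmetric]) (rule sum.cong[OF refl Aseq_rec])
      also have "(\<Sum>m\<in>?M. \<Sum>j\<in>{0<..<m}. \<alpha> j * Aseq \<alpha> (m - j))
          = (\<Sum>m\<in>?M. \<Sum>j\<in>{j. j \<in> ?M \<and> j < m}. \<alpha> j * Aseq \<alpha> (m - j))"
        by (intro sum.cong refl) auto
      also have "\<dots> = (\<Sum>j\<in>?M. \<Sum>m\<in>{m. m \<in> ?M \<and> j < m}. \<alpha> j * Aseq \<alpha> (m - j))"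
        by (rule sum.swap_restrict) auto
      also have "\<dots> \<le> (\<Sum>j\<in>?M. \<alpha> j * S)"
      proof (rule sum_mono)
        fix j assume j: "j \<in> ?M"
        have "(\<Sum>m\<in>{m. m \<in> ?M \<and> j < m}. Aseq \<alpha> (m - j)) = (\<Sum>i\<in>{0<..n - j}. Aseq \<alpha> i)"
          by (rule sum.reindex_bij_witness[where i = "\<lambda>i. i + j" and j = "\<lambda>m. m - j"]) auto
        also have "\<dots> \<le> S" using less j by auto
        finally have "(\<Sum>m\<in>{m. m \<in> ?M \<and> j < m}. Aseq \<alpha> (m - j)) \<le> S" .
        hence "\<alpha> j * (\<Sum>m\<in>{m. m \<in> ?M \<and> j < m}. Aseq \<alpha> (m - j)) \<le> \<alpha> j * S"
          using nonneg j by (intro mult_left_mono) auto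
        thus "(\<Sum>m\<in>{m. m \<in> ?M \<and> j < m}. \<alpha> j * Aseq \<alpha> (m - j)) \<le> \<alpha> j * S"
          by (simp add: sum_distrib_left)
      qed
      also have "\<dots> = (\<Sum>j\<in>?M. \<alpha> j) * S" by (simp add: sum_distrib_right)
      also have "\<dots> \<le> a * S" using psum[of n] S0 by (intro mult_right_mono) auto
      finally have "(\<Sum>m\<in>?M. Aseq \<alpha> m) \<le> (\<Sum>m\<in>?M. \<alpha> m) + a * S" by simp
      also have "\<dots> \<le> a + a * S" using psum[of n] by simp
      finally show ?thesis using Seq by simp
    qed
  qed
  define t where "t = (1 + a) / 2"
  have t: "0 < t" "t < 1" "a < t" using a0 a1 unfolding t_def by auto
  define \<epsilon> where "\<epsilon> = 1 - t powr (1 / \<gamma>)"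
  have tp: "t powr (1 / \<gamma>) < 1" "0 < t powr (1 / \<gamma>)"
    using powr_less_mono2[of "1/\<gamma>" t 1] t gamma_gt1 by auto
  have eps: "0 < \<epsilon>" "\<epsilon> < 1" using tp unfolding \<epsilon>_def by auto
  have oneeps: "(1 - \<epsilon>) powr (- \<gamma>) = 1 / t"
  proof -
    have "(1 - \<epsilon>) powr \<gamma> = t" unfolding \<epsilon>_def using gamma_gt1 t by (simp add: powr_powr)
    thus ?thesis by (simp add: powr_minus divide_inverse)
  qed
  define D where "D = c * \<epsilon> powr (- \<gamma>)"
  have D0: "0 \<le> D" unfolding D_def using c_pos by simp
  define C where "C = (c + D * S) / (1 - a / t)"
  have at: "0 < 1 - a / t" using t by simp
  have C0: "0 < C" unfolding C_def using c_pos D0 S0 at by (intro divide_pos_pos add_pos_nonneg) auto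
  have Ceq1: "C * (1 - a / t) = c + D * S"
  proof -
    define X where "X = 1 - a / t"
    have "X \<noteq> 0" using at unfolding X_def by linarith
    hence "(c + D * S) / X * X = c + D * S" by simp
    thus ?thesis unfolding C_def X_def .
  qed
  have Ceq2: "C * (1 - a / t) = C - (a / t) * C" by (simp add: algebra_simps)
  have Ceq: "c + D * S + (a / t) * C = C" using Ceq1 Ceq2 by linarith
  have main: "k \<ge> 1 \<Longrightarrow> Aseq \<alpha> k \<le> C * real k powr (- \<gamma>)" for k
  proof (induction k rule: less_induct)
    case (less k)
    define K where "K = real k"
    define kg where "kg = K powr (- \<gamma>)"
    have K0: "K > 0" using less.prems K_def by simp
    have kg0: "kg > 0" unfolding kg_def using K0 by simp
    define J1 where "J1 = {j \<in> {0<..<k}. real j \<le> \<epsilon> * K}"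
    define J2 where "J2 = {j \<in> {0<..<k}. \<not> real j \<le> \<epsilon> * K}"
    have split: "(\<Sum>j\<in>{0<..<k}. \<alpha> j * Aseq \<alpha> (k - j))
        = (\<Sum>j\<in>J1. \<alpha> j * Aseq \<alpha> (k - j)) + (\<Sum>j\<in>J2. \<alpha> j * Aseq \<alpha> (k - j))"
    proof -
      have e: "{0<..<k} = J1 \<union> J2" and d: "J1 \<inter> J2 = {}" unfolding J1_def J2_def by auto
      have f: "finite J1" "finite J2" unfolding J1_def J2_def by auto
      show ?thesis by (subst e) (rule sum.union_disjoint[OF f d])
    qed
    have b1: "(\<Sum>j\<in>J1. \<alpha> j * Aseq \<alpha> (k - j)) \<le> (a / t) * C * kg"
    proof -
      have "(\<Sum>j\<in>J1. \<alpha> j * Aseq \<alpha> (k - j)) \<le> (\<Sum>j\<in>J1. \<alpha> j * (C * kg / t))"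
      proof (rule sum_mono)
        fix j assume j: "j \<in> J1"
        hence jk: "0 < j" "j < k" "real j \<le> \<epsilon> * K" unfolding J1_def by auto
        have IH: "Aseq \<alpha> (k - j) \<le> C * real (k - j) powr (- \<gamma>)" by (rule less.IH) (use jk in auto)
        have "(1 - \<epsilon>) * K \<le> real (k - j)" using jk K_def by (simp add: of_nat_diff algebra_simps)
        moreover have "0 < (1 - \<epsilon>) * K" using eps K0 by simp
        ultimately have "real (k - j) powr (- \<gamma>) \<le> ((1 - \<epsilon>) * K) powr (- \<gamma>)"
          using gamma_gt1 by (intro powr_mono2') auto
        also have "\<dots> = kg / t" using oneeps by (simp add: powr_mult kg_def)
        finally have "Aseq \<alpha> (k - j) \<le> C * kg / t" using IH C0
          by (smt (verit, best) mult_left_mono times_divide_eq_right)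
        thus "\<alpha> j * Aseq \<alpha> (k - j) \<le> \<alpha> j * (C * kg / t)"
          using nonneg jk by (intro mult_left_mono) auto
      qed
      also have "\<dots> = (\<Sum>j\<in>J1. \<alpha> j) * (C * kg / t)" by (rule sum_distrib_right[symmetric])
      also have "\<dots> \<le> a * (C * kg / t)"
      proof (rule mult_right_mono)
        show "(\<Sum>j\<in>J1. \<alpha> j) \<le> a" by (rule psum2[of J1 k]) (auto simp: J1_def)
        show "0 \<le> C * kg / t" using C0 kg0 t by simp
      qed
      finally show ?thesis by simp
    qed
    have b2: "(\<Sum>j\<in>J2. \<alpha> j * Aseq \<alpha> (k - j)) \<le> D * kg * S"
    proof -
      have "(\<Sum>j\<in>J2. \<alpha> j * Aseq \<alpha> (k - j)) \<le> (\<Sum>j\<in>J2. D * kg * Aseq \<alpha> (k - j))"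
      proof (rule sum_mono)
        fix j assume j: "j \<in> J2"
        hence jk: "0 < j" "j < k" "\<epsilon> * K < real j" unfolding J2_def by auto
        have "\<alpha> j \<le> c * real j powr (- \<gamma>)" using bound jk by auto
        also have "real j powr (- \<gamma>) \<le> (\<epsilon> * K) powr (- \<gamma>)"
          using gamma_gt1 eps K0 jk by (intro powr_mono2') auto
        hence "c * real j powr (- \<gamma>) \<le> c * (\<epsilon> * K) powr (- \<gamma>)" using c_pos by simp
        also have "\<dots> = D * kg" by (simp add: D_def kg_def powr_mult)
        finally have "\<alpha> j \<le> D * kg" .
        thus "\<alpha> j * Aseq \<alpha> (k - j) \<le> D * kg * Aseq \<alpha> (k - j)"
          using Anonneg[of "k - j"] jk by (intro mult_right_mono) auto
      qed
      also have "\<dots> = D * kg * (\<Sum>j\<in>J2. Aseq \<alpha> (k - j))" by (simp add: sum_distrib_left)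
      also have "(\<Sum>j\<in>J2. Aseq \<alpha> (k - j)) \<le> (\<Sum>j\<in>{0<..<k}. Aseq \<alpha> (k - j))"
        using Anonneg by (intro sum_mono2) (auto simp: J2_def)
      also have "(\<Sum>j\<in>{0<..<k}. Aseq \<alpha> (k - j)) = (\<Sum>m\<in>{0<..k - 1}. Aseq \<alpha> m)"
        by (rule sum.reindex_bij_witness[where i = "\<lambda>m. k - m" and j = "\<lambda>j. k - j"]) auto
      also have "\<dots> \<le> S" by (rule Pbound)
      finally show ?thesis using D0 kg0 by (simp add: mult_left_mono)
    qed
    have b0: "\<alpha> k \<le> c * kg" using bound less.prems kg_def K_def by simp
    have "Aseq \<alpha> k \<le> c * kg + (a / t) * C * kg + D * kg * S"
      using Aseq_rec[of \<alpha> k] split b0 b1 b2 by linarith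
    also have "\<dots> = (c + D * S + (a / t) * C) * kg" by (simp add: algebra_simps)
    also have "\<dots> = C * kg" using Ceq by simp
    finally show ?case by (simp add: kg_def K_def)
  qed
  show ?thesis using C0 main by blast
qed

end
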